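(* Let $f\in\mathbb R[x_1,\ldots,x_d]$ be a convenient non-degenerate weighted homogeneous polynomial and let $\delta_i$ be the exponent of the pure monomial $x_i^{\delta_i}$ of $f$. Let $B_f(T)=\frac{(\mathbb L-\mathbb 1)^d}{\mathbb 1-T}\sum_{\tau\in\Gamma_f^c}S_{\sigma(\tau)}(T)$. Then, in $\widehat{\mathcal M}[[T]]$, $$B_f(T)-\frac{T}{\mathbb 1-T}=-\sum_{m\ge1}\mathbb L^{-\sum_{i=1}^d\lfloor m/\delta_i\rfloor}T^m.$$
   Context: $\mathcal{AS}$-sets: semialgebraic $S\subset\mathbb P^n_{\mathbb R}$ such that for every real analytic arc $\gamma:(-1,1)\to\mathbb P^n_{\mathbb R}$ with $\gamma((-1,0))\subset S$ there is $\varepsilon>0$ with $\gamma((0,\varepsilon))\subset S$. $K_0(\mathcal{AS})$ is their Grothendieck ring (scissor relations, bijections with $\mathcal{AS}$ graph, cartesian product). For $n\ge1$, $K_0(\mathcal{AS}^n_{\mathrm{mon}})$ is the Grothendieck group of symbols $[\varphi_X:\mathbb R^*\circlearrowright X\to\mathbb R^*]$ ($X$ an $\mathcal{AS}$-set with $\mathbb R^*$-action and $\varphi_X$ both with $\mathcal{AS}$ graphs, $\varphi_X(\lambda x)=\lambda^n\varphi_X(x)$), modulo equivariant $\mathcal{AS}$-bijections over $\mathbb R^*$, scissor relations for invariant closed $\mathcal{AS}$-subsets, and independence of the choice of lifting of the action to $Y\times\mathbb R^m$ for symbols $\varphi_Y\circ\operatorname{pr}_Y$; product is fiber product over $\mathbb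 R^*$; $K_0(\mathcal{AS})$ acts by $[A]\cdot[\varphi_X]=[\varphi_X\circ\operatorname{pr}_X:A\times X\to\mathbb R^*]$ (trivial action on $A$). $K_0(\mathcal{AS}_{\mathrm{mon}})=\varinjlim_n K_0(\mathcal{AS}^n_{\mathrm{mon}})$ (for $n=km$, a level-$m$ action $\lambda\cdot x$ becomes $\lambda^k\cdot x$). $\mathbb 1=[\mathrm{id}:\mathbb R^*\to\mathbb R^*]$ with $\lambda\cdot r=\lambda r$, $\mathbb L=[\mathbb R]\cdot\mathbb 1$, $\mathcal M=K_0(\mathcal{AS}_{\mathrm{mon}})[\mathbb L^{-1}]$, and $\widehat{\mathcal M}$ is the completion of $\mathcal M$ with respect to the filtration $\mathcal F^m\mathcal M$ spanned by $[S]\mathbb L^{-i}$ with $i-\dim S\ge m$. For $f=\sum c_\nu x^\nu$: $\Gamma_f=\operatorname{Conv}(\bigcup_{c_\nu\neq0}(\nu+\mathbb R^d_{\ge0}))$ is the Newton polyhedron, $\Gamma_f^c$ its set of compact faces, $f_\tau=\sum_{\nu\in\tau}c_\nu x^\nu$, $m(k)=\inf\{k\cdot x:x\in\Gamma_f\}$, $\sigma(\tau)=\{k\in\mathbb R^d_{\ge0}:\{x\in\Gamma_f:k\cdot x=m(k)\}=\tau\}$, $S_{\sigma(\tau)}(T)=\sum_{k\in\sigma(\tau)\cap\mathbb N^d}\mathbb L^{-|k|}T^{m(k)}$, $|k|=\sum_ik_i$. $f$ is convenient if each $x_i^{\delta_i}$ ($\delta_i\ge1$) appears in $f$; non-degenerate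 if for every $\tau\in\Gamma_f^c$ the partials of $f_\tau$ have no common zero in $(\mathbb R^* )^d$; weighted homogeneous if $f(\lambda^{w_1}x_1,\ldots,\lambda^{w_d}x_d)=\lambda^wf(x)$ for some $w_i,w\in\mathbb N_{>0}$ and all $\lambda\in\mathbb R$. *)

theory Defs
  imports "HOL-Analysis.Analysis" "HOL-Computational_Algebra.Formal_Laurent_Series"
begin

text \<open>Real polynomials in the variables x_i, i ranging over a finite index type 'n
  (so d = CARD('n)), are represented by their coefficient function
  c :: ('n \<Rightarrow> nat) \<Rightarrow> real (exponent vector \<mapsto> coefficient), of finite support.\<close>

definition mono_supp :: "(('n::finite \<Rightarrow> nat) \<Rightarrow> real) \<Rightarrow> ('n \<Rightarrow> nat) set" where
  "mono_supp c = {\<nu>. c \<nu> \<noteq> 0}"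

definition is_poly :: "(('n::finite \<Rightarrow> nat) \<Rightarrow> real) \<Rightarrow> bool" where
  "is_poly c \<longleftrightarrow> finite (mono_supp c)"

definition poly_eval :: "(('n::finite \<Rightarrow> nat) \<Rightarrow> real) \<Rightarrow> real^'n \<Rightarrow> real" where
  "poly_eval c x = (\<Sum>\<nu>\<in>mono_supp c. c \<nu> * (\<Prod>i\<in>UNIV. (x $ i) ^ \<nu> i))"

definition poly_pderiv :: "'n::finite \<Rightarrow> (('n \<Rightarrow> nat) \<Rightarrow> real) \<Rightarrow> (('n \<Rightarrow> nat) \<Rightarrow> real)" where
  "poly_pderiv j c = (\<lambda>\<nu>. real (\<nu> j + 1) * c (\<nu>(j := \<nu> j + 1)))"

definition exp_vec :: "('n::finite \<Rightarrow> nat) \<Rightarrow> real^'n" where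
  "exp_vec \<nu> = (\<chi> i. real (\<nu> i))"

definition pure_exp :: "'n \<Rightarrow> nat \<Rightarrow> ('n \<Rightarrow> nat)" where
  "pure_exp i e = (\<lambda>j. if j = i then e else 0)"

definition nonneg_orthant :: "(real^'n::finite) set" where
  "nonneg_orthant = {x. \<forall>i. 0 \<le> x $ i}"

definition newton_polyhedron :: "(('n::finite \<Rightarrow> nat) \<Rightarrow> real) \<Rightarrow> (real^'n) set" where
  "newton_polyhedron c =
     convex hull (\<Union>\<nu>\<in>mono_supp c. (\<lambda>y. exp_vec \<nu> + y) ` nonneg_orthant)"

definition compact_faces :: "(('n::finite \<Rightarrow> nat) \<Rightarrow> real) \<Rightarrow> (real^'n) set set" where
  "compact_faces c = {\<tau>. \<tau> face_of newton_polyhedron c \<and> compact \<tau> \<and> \<tau> \<noteq> {}}"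

definition face_part :: "(('n::finite \<Rightarrow> nat) \<Rightarrow> real) \<Rightarrow> (real^'n) set \<Rightarrow> (('n \<Rightarrow> nat) \<Rightarrow> real)" where
  "face_part c \<tau> = (\<lambda>\<nu>. if exp_vec \<nu> \<in> \<tau> then c \<nu> else 0)"

definition mfun :: "(('n::finite \<Rightarrow> nat) \<Rightarrow> real) \<Rightarrow> real^'n \<Rightarrow> real" where
  "mfun c k = Inf ((\<lambda>x. k \<bullet> x) ` newton_polyhedron c)"

definition sigma_cone :: "(('n::finite \<Rightarrow> nat) \<Rightarrow> real) \<Rightarrow> (real^'n) set \<Rightarrow> (real^'n) set" where
  "sigma_cone c \<tau> = {k \<in> nonneg_orthant.
      {x \<in> newton_polyhedron c. k \<bullet> x = mfun c k} = \<tau>}"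

definition convenient :: "(('n::finite \<Rightarrow> nat) \<Rightarrow> real) \<Rightarrow> bool" where
  "convenient c \<longleftrightarrow> (\<forall>i. \<exists>e\<ge>1. c (pure_exp i e) \<noteq> 0)"

definition non_degenerate :: "(('n::finite \<Rightarrow> nat) \<Rightarrow> real) \<Rightarrow> bool" where
  "non_degenerate c \<longleftrightarrow> (\<forall>\<tau>\<in>compact_faces c.
      \<not> (\<exists>x::real^'n. (\<forall>i. x $ i \<noteq> 0) \<and>
             (\<forall>j. poly_eval (poly_pderiv j (face_part c \<tau>)) x = 0)))"

definition weighted_homogeneous :: "(('n::finite \<Rightarrow> nat) \<Rightarrow> real) \<Rightarrow> bool" where
  "weighted_homogeneous c \<longleftrightarrow> (\<exists>(w::'n \<Rightarrow> nat) (w0::nat). (\<forall>i. w i > 0) \<and> w0 > 0 \<and>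
      (\<forall>(t::real) x. poly_eval c (\<chi> i. t ^ w i * x $ i) = t ^ w0 * poly_eval c x))"

text \<open>The completed coefficient ring: Laurent series in u = L^{-1} over the integers.
  L is fls_X_inv, L^{-1} is fls_X, the unit \<one> is 1. The series ring is (int fls) fps,
  with T = fps_X.\<close>

abbreviation LL :: "int fls" where "LL \<equiv> fls_X_inv"
abbreviation LLinv :: "int fls" where "LLinv \<equiv> fls_X"

text \<open>S_{\<sigma>(\<tau>)}(T) = \<Sum>_{k\<in>\<sigma>(\<tau>)\<inter>N^d} L^{-|k|} T^{m(k)}, written coefficientwise:
  the coefficient of T^m u^n counts the lattice points k with |k| = n and m(k) = m.\<close>
definition S_sigma :: "(('n::finite \<Rightarrow> nat) \<Rightarrow> real) \<Rightarrow> (real^'n) set \<Rightarrow> int fls fps" where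
  "S_sigma c \<tau> = Abs_fps (\<lambda>m. fps_to_fls (Abs_fps (\<lambda>n.
      int (card {k :: 'n \<Rightarrow> nat. exp_vec k \<in> sigma_cone c \<tau> \<and> sum k UNIV = n
                                \<and> mfun c (exp_vec k) = real m}))))"

definition geom_T :: "int fls fps" where
  "geom_T = Abs_fps (\<lambda>_. 1)"

definition B_f :: "(('n::finite \<Rightarrow> nat) \<Rightarrow> real) \<Rightarrow> int fls fps" where
  "B_f c = fps_const ((LL - 1) ^ CARD('n)) * geom_T * (\<Sum>\<tau>\<in>compact_faces c. S_sigma c \<tau>)"

end

theory Submission
  imports Defs "HOL-Computational_Algebra.Polynomial"
begin


lemma uni2:
  fixes b :: "'a \<Rightarrow> real"
  assumes "finite S" "\<forall>y::real. (\<Sum>\<nu>\<in>S. b \<nu> * y ^ g \<nu>) = y ^ e0 * (\<Sum>\<nu>\<in>S. b \<nu>)" "e \<noteq> e0"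
  shows "(\<Sum>\<nu>\<in>{\<nu>\<in>S. g \<nu> = e}. b \<nu>) = 0"
proof -
  define p where "p = (\<Sum>\<nu>\<in>S. monom (b \<nu>) (g \<nu>)) - monom (\<Sum>\<nu>\<in>S. b \<nu>) e0"
  have "\<forall>y. poly p y = 0" using assms(2)
    by (simp add: p_def poly_sum poly_monom mult.commute)
  hence "p = 0" using poly_all_0_iff_0 by blast
  hence "coeff p e = 0" by simp
  moreover have "coeff p e = (\<Sum>\<nu>\<in>S. if g \<nu> = e then b \<nu> else 0)"
    using assms(3) by (simp add: p_def coeff_sum coeff_monom)
  ultimately show ?thesis using assms(1) by (simp add: sum.inter_filter)
qed

lemma uni1:
  fixes b :: "'a \<Rightarrow> real"
  assumes "finite S" "\<forall>y::real. (\<Sum>\<nu>\<in>S. b \<nu> * y ^ g \<nu>) = 0"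
  shows "(\<Sum>\<nu>\<in>{\<nu>\<in>S. g \<nu> = e}. b \<nu>) = 0"
proof -
  define p where "p = (\<Sum>\<nu>\<in>S. monom (b \<nu>) (g \<nu>))"
  have "\<forall>y. poly p y = 0" using assms(2)
    by (simp add: p_def poly_sum poly_monom mult.commute)
  hence "p = 0" using poly_all_0_iff_0 by blast
  hence "coeff p e = 0" by simp
  moreover have "coeff p e = (\<Sum>\<nu>\<in>S. if g \<nu> = e then b \<nu> else 0)"
    by (simp add: p_def coeff_sum coeff_monom)
  ultimately show ?thesis using assms(1) by (simp add: sum.inter_filter)
qed

lemma mv_zero_gen:
  fixes V :: "'n::finite set"
  shows "\<forall>S (a::('n\<Rightarrow>nat)\<Rightarrow>real). finite S \<longrightarrow> (\<forall>\<nu>\<in>S. \<forall>i. i \<notin> V \<longrightarrow> \<nu> i = 0) \<longrightarrow>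
     (\<forall>x::real^'n. (\<Sum>\<nu>\<in>S. a \<nu> * (\<Prod>i\<in>V. (x$i)^(\<nu> i))) = 0) \<longrightarrow> (\<forall>\<nu>\<in>S. a \<nu> = 0)"
proof (induction V rule: finite_induct[OF finite])
  case 1
  show ?case
  proof (intro allI impI ballI)
    fix S and a :: "('n\<Rightarrow>nat)\<Rightarrow>real" and \<nu>
    assume fS: "finite S" and supp: "\<forall>\<nu>\<in>S. \<forall>i. i \<notin> {} \<longrightarrow> \<nu> i = 0"
      and z: "\<forall>x::real^'n. (\<Sum>\<nu>\<in>S. a \<nu> * (\<Prod>i\<in>{}. (x$i)^(\<nu> i))) = 0" and nu: "\<nu> \<in> S"
    have e0: "\<mu> = (\<lambda>_. 0)" if "\<mu> \<in> S" for \<mu> using supp that by auto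
    have "S = {\<nu>}" using e0 nu by blast
    thus "a \<nu> = 0" using z nu by auto
  qed
next
  case (2 j V)
  show ?case
  proof (intro allI impI ballI)
    fix S and a :: "('n\<Rightarrow>nat)\<Rightarrow>real" and \<nu>
    assume fS: "finite S" and supp: "\<forall>\<nu>\<in>S. \<forall>i. i \<notin> insert j V \<longrightarrow> \<nu> i = 0"
      and z: "\<forall>x::real^'n. (\<Sum>\<nu>\<in>S. a \<nu> * (\<Prod>i\<in>insert j V. (x$i)^(\<nu> i))) = 0" and nu: "\<nu> \<in> S"
    define e where "e = \<nu> j"
    define M where "M = (\<lambda>\<mu> (x::real^'n). \<Prod>i\<in>V. (x$i)^(\<mu> i))"
    have key: "(\<Sum>\<mu>\<in>{\<mu>\<in>S. \<mu> j = e}. a \<mu> * M \<mu> x) = 0" for x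
    proof -
      have "\<forall>y::real. (\<Sum>\<mu>\<in>S. (a \<mu> * M \<mu> x) * y ^ (\<mu> j)) = 0"
      proof
        fix y :: real
        define x' where "x' = (\<chi> i. if i = j then y else x$i)"
        have "(\<Prod>i\<in>insert j V. (x'$i)^(\<mu> i)) = y ^ (\<mu> j) * M \<mu> x" for \<mu>
        proof -
          have "(\<Prod>i\<in>V. (x'$i)^(\<mu> i)) = M \<mu> x"
            unfolding M_def x'_def using 2(2) by (intro prod.cong) auto
          thus ?thesis using 2 by (simp add: x'_def)
        qed
        thus "(\<Sum>\<mu>\<in>S. (a \<mu> * M \<mu> x) * y ^ (\<mu> j)) = 0"
          using z[rule_format, of x'] by (simp add: algebra_simps)
      qed
      from uni1[OF fS this, of e] show ?thesis by simp
    qed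
    define S' where "S' = (\<lambda>\<mu>. \<mu>(j:=0)) ` {\<mu>\<in>S. \<mu> j = e}"
    define a' where "a' = (\<lambda>\<mu>::'n\<Rightarrow>nat. a (\<mu>(j:=e)))"
    have inj: "inj_on (\<lambda>\<mu>. \<mu>(j:=0)) {\<mu>\<in>S. \<mu> j = e}"
    proof (rule inj_onI)
      fix p q assume "p \<in> {\<mu>\<in>S. \<mu> j = e}" "q \<in> {\<mu>\<in>S. \<mu> j = e}" "p(j:=0) = q(j:=0)"
      thus "p = q" by (metis (mono_tags, lifting) fun_upd_triv fun_upd_upd mem_Collect_eq)
    qed
    have A1: "finite S'" and A2: "\<forall>\<mu>\<in>S'. \<forall>i. i \<notin> V \<longrightarrow> \<mu> i = 0"
      and A3: "\<forall>x::real^'n. (\<Sum>\<mu>\<in>S'. a' \<mu> * (\<Prod>i\<in>V. (x$i)^(\<mu> i))) = 0"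
    proof -
      show "finite S'" using fS by (simp add: S'_def)
      show "\<forall>\<mu>\<in>S'. \<forall>i. i \<notin> V \<longrightarrow> \<mu> i = 0" using supp by (auto simp: S'_def)
      show "\<forall>x::real^'n. (\<Sum>\<mu>\<in>S'. a' \<mu> * (\<Prod>i\<in>V. (x$i)^(\<mu> i))) = 0"
      proof
        fix x :: "real^'n"
        have "(\<Sum>\<mu>\<in>S'. a' \<mu> * (\<Prod>i\<in>V. (x$i)^(\<mu> i)))
            = (\<Sum>\<mu>\<in>{\<mu>\<in>S. \<mu> j = e}. a' (\<mu>(j:=0)) * (\<Prod>i\<in>V. (x$i)^((\<mu>(j:=0)) i)))"
          unfolding S'_def by (rule sum.reindex[OF inj, unfolded comp_def])
        also have "\<dots> = (\<Sum>\<mu>\<in>{\<mu>\<in>S. \<mu> j = e}. a \<mu> * M \<mu> x)"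
        proof (intro sum.cong refl)
          fix \<mu> assume "\<mu> \<in> {\<mu>\<in>S. \<mu> j = e}"
          hence "\<mu>(j:=0,j:=e) = \<mu>" by auto
          moreover have "(\<Prod>i\<in>V. (x$i)^((\<mu>(j:=0)) i)) = M \<mu> x"
            unfolding M_def using 2(2) by (intro prod.cong) auto
          ultimately show "a' (\<mu>(j:=0)) * (\<Prod>i\<in>V. (x$i)^((\<mu>(j:=0)) i)) = a \<mu> * M \<mu> x"
            by (simp add: a'_def)
        qed
        finally show "(\<Sum>\<mu>\<in>S'. a' \<mu> * (\<Prod>i\<in>V. (x$i)^(\<mu> i))) = 0" using key by simp
      qed
    qed
    have "\<forall>\<mu>\<in>S'. a' \<mu> = 0" using 2(3) A1 A2 A3 by blast
    moreover have "\<nu>(j:=0) \<in> S'" using nu by (auto simp: S'_def e_def)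
    ultimately have "a' (\<nu>(j:=0)) = 0" by blast
    thus "a \<nu> = 0" unfolding a'_def e_def by simp
  qed
qed

lemma mv_zero:
  fixes a :: "('n::finite\<Rightarrow>nat)\<Rightarrow>real"
  assumes "finite S" "\<forall>x::real^'n. (\<Sum>\<nu>\<in>S. a \<nu> * (\<Prod>i\<in>UNIV. (x$i)^(\<nu> i))) = 0" "\<nu> \<in> S"
  shows "a \<nu> = 0"
  using mv_zero_gen[of UNIV] assms by blast




lemma prod_twist:
  fixes x :: "real^'n::finite"
  shows "(\<Prod>i\<in>UNIV. ((\<chi> i. t ^ w i * x $ i)$i) ^ \<nu> i) = t ^ (\<Sum>i\<in>UNIV. w i * \<nu> i) * (\<Prod>i\<in>UNIV. (x$i) ^ \<nu> i)"
  by (simp add: power_mult_distrib prod.distrib power_sum power_mult)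

lemma wh_hyperplane:
  fixes c :: "('n::finite \<Rightarrow> nat) \<Rightarrow> real"
  assumes "is_poly c" "weighted_homogeneous c"
  obtains w :: "'n \<Rightarrow> nat" and w0 :: nat where "\<forall>i. w i > 0" "w0 > 0"
    "\<forall>\<nu>\<in>mono_supp c. (\<Sum>i\<in>UNIV. w i * \<nu> i) = w0"
proof -
  obtain w :: "'n \<Rightarrow> nat" and w0 :: nat where w: "\<forall>i. w i > 0" "w0 > 0"
    and h: "\<forall>(t::real) x. poly_eval c (\<chi> i. t ^ w i * x $ i) = t ^ w0 * poly_eval c x"
    using assms(2) unfolding weighted_homogeneous_def by blast
  define S where "S = mono_supp c"
  have fS: "finite S" using assms(1) by (simp add: S_def is_poly_def)
  define g where "g = (\<lambda>\<nu>::'n\<Rightarrow>nat. \<Sum>i\<in>UNIV. w i * \<nu> i)"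
  have "g \<nu> = w0" if nu: "\<nu> \<in> S" for \<nu>
  proof (rule ccontr)
    assume ne: "g \<nu> \<noteq> w0"
    have "\<forall>x::real^'n. (\<Sum>\<mu>\<in>{\<mu>\<in>S. g \<mu> = g \<nu>}. c \<mu> * (\<Prod>i\<in>UNIV. (x$i)^(\<mu> i))) = 0"
    proof
      fix x :: "real^'n"
      have "\<forall>t::real. (\<Sum>\<mu>\<in>S. (c \<mu> * (\<Prod>i\<in>UNIV. (x$i)^(\<mu> i))) * t ^ g \<mu>)
              = t ^ w0 * (\<Sum>\<mu>\<in>S. c \<mu> * (\<Prod>i\<in>UNIV. (x$i)^(\<mu> i)))"
      proof
        fix t :: real
        have "poly_eval c (\<chi> i. t ^ w i * x $ i) = (\<Sum>\<mu>\<in>S. (c \<mu> * (\<Prod>i\<in>UNIV. (x$i)^(\<mu> i))) * t ^ g \<mu>)"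
          unfolding poly_eval_def S_def g_def prod_twist by (simp add: algebra_simps)
        moreover have "poly_eval c x = (\<Sum>\<mu>\<in>S. c \<mu> * (\<Prod>i\<in>UNIV. (x$i)^(\<mu> i)))"
          unfolding poly_eval_def S_def by simp
        ultimately show "(\<Sum>\<mu>\<in>S. (c \<mu> * (\<Prod>i\<in>UNIV. (x$i)^(\<mu> i))) * t ^ g \<mu>)
              = t ^ w0 * (\<Sum>\<mu>\<in>S. c \<mu> * (\<Prod>i\<in>UNIV. (x$i)^(\<mu> i)))" using h by metis
      qed
      from uni2[OF fS this ne] show "(\<Sum>\<mu>\<in>{\<mu>\<in>S. g \<mu> = g \<nu>}. c \<mu> * (\<Prod>i\<in>UNIV. (x$i)^(\<mu> i))) = 0" .
    qed
    hence "c \<nu> = 0" using mv_zero[of "{\<mu>\<in>S. g \<mu> = g \<nu>}" c \<nu>] fS nu by auto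
    thus False using nu by (simp add: S_def mono_supp_def)
  qed
  thus ?thesis using that w by (auto simp: S_def g_def)
qed

lemma supp_on_simplex:
  fixes c :: "('n::finite \<Rightarrow> nat) \<Rightarrow> real"
  assumes "is_poly c" "weighted_homogeneous c" "\<forall>i. \<delta> i \<ge> 1 \<and> c (pure_exp i (\<delta> i)) \<noteq> 0"
  shows "\<forall>\<nu>\<in>mono_supp c. (\<Sum>i\<in>UNIV. real (\<nu> i) / real (\<delta> i)) = 1"
proof -
  obtain w :: "'n \<Rightarrow> nat" and w0 :: nat where w: "\<forall>i. w i > 0" "w0 > 0"
    and hw: "\<forall>\<nu>\<in>mono_supp c. (\<Sum>i\<in>UNIV. w i * \<nu> i) = w0"
    using wh_hyperplane[OF assms(1,2)] by blast
  have wd: "w i * \<delta> i = w0" for i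
  proof -
    have "pure_exp i (\<delta> i) \<in> mono_supp c" using assms(3) by (simp add: mono_supp_def)
    hence "(\<Sum>j\<in>UNIV. w j * pure_exp i (\<delta> i) j) = w0" using hw by blast
    moreover have "(\<Sum>j\<in>UNIV. w j * pure_exp i (\<delta> i) j) = w i * \<delta> i"
      by (simp add: pure_exp_def if_distrib cong: if_cong)
    ultimately show ?thesis by simp
  qed
  show ?thesis
  proof
    fix \<nu> assume "\<nu> \<in> mono_supp c"
    hence e: "real (\<Sum>i\<in>UNIV. w i * \<nu> i) = real w0" using hw by simp
    have "real (\<nu> i) / real (\<delta> i) = real (w i * \<nu> i) / real w0" for i
    proof -
      have "real (w i) * real (\<delta> i) = real w0" using wd[of i] by (metis of_nat_mult)
      moreover have "real (\<delta> i) > 0" using assms(3) by (simp add: Suc_le_eq)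
      ultimately show ?thesis using w by (simp add: field_simps)
    qed
    hence "(\<Sum>i\<in>UNIV. real (\<nu> i) / real (\<delta> i)) = (\<Sum>i\<in>UNIV. real (w i * \<nu> i)) / real w0"
      by (simp add: sum_divide_distrib)
    also have "\<dots> = 1" using e w by (simp del: of_nat_mult)
    finally show "(\<Sum>i\<in>UNIV. real (\<nu> i) / real (\<delta> i)) = 1" .
  qed
qed




definition avec :: "('n::finite \<Rightarrow> nat) \<Rightarrow> real^'n" where
  "avec \<delta> = (\<chi> i. 1 / real (\<delta> i))"

definition Pset :: "('n::finite \<Rightarrow> nat) \<Rightarrow> (real^'n) set" where
  "Pset \<delta> = {x. (\<forall>i. 0 \<le> x$i) \<and> 1 \<le> avec \<delta> \<bullet> x}"

definition ev :: "('n::finite \<Rightarrow> nat) \<Rightarrow> 'n \<Rightarrow> real^'n" where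
  "ev \<delta> i = (\<chi> j. if j = i then real (\<delta> i) else 0)"

lemma ev_exp: "exp_vec (pure_exp i (\<delta> i)) = ev \<delta> i"
  by (simp add: exp_vec_def pure_exp_def ev_def vec_eq_iff)

lemma avec_inner: "avec \<delta> \<bullet> x = (\<Sum>i\<in>UNIV. x$i / real (\<delta> i))"
  by (simp add: avec_def inner_vec_def)

lemma avec_ev: "\<delta> i \<ge> 1 \<Longrightarrow> avec \<delta> \<bullet> ev \<delta> i = 1"
proof -
  assume "\<delta> i \<ge> 1"
  hence "avec \<delta> \<bullet> ev \<delta> i = (\<Sum>j\<in>UNIV. if j = i then 1 else 0)"
    unfolding avec_inner by (intro sum.cong) (auto simp: ev_def)
  thus ?thesis by simp
qed

lemma convex_Pset: "convex (Pset \<delta>)"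
proof (rule convexI)
  fix x y :: "real^'a" and u v :: real
  assume "x \<in> Pset \<delta>" "y \<in> Pset \<delta>" and h: "0 \<le> u" "0 \<le> v" "u + v = 1"
  hence h2: "\<forall>i. 0 \<le> x $ i" "1 \<le> avec \<delta> \<bullet> x" "\<forall>i. 0 \<le> y $ i" "1 \<le> avec \<delta> \<bullet> y"
    by (auto simp: Pset_def)
  have "u * 1 + v * 1 \<le> u * (avec \<delta> \<bullet> x) + v * (avec \<delta> \<bullet> y)"
    using h h2 by (intro add_mono mult_left_mono) auto
  hence "1 \<le> avec \<delta> \<bullet> (u *\<^sub>R x + v *\<^sub>R y)" using h by (simp add: inner_add_right)
  moreover have "\<forall>i. 0 \<le> (u *\<^sub>R x + v *\<^sub>R y) $ i" using h h2 by simp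
  ultimately show "u *\<^sub>R x + v *\<^sub>R y \<in> Pset \<delta>" by (simp add: Pset_def)
qed

lemma closed_Pset: "closed (Pset \<delta>)"
proof -
  have "Pset \<delta> = (\<Inter>i. {x::real^'a. x$i \<ge> 0}) \<inter> {x. avec \<delta> \<bullet> x \<ge> 1}"
    by (auto simp: Pset_def)
  thus ?thesis
    by (simp add: closed_INT closed_Int closed_halfspace_component_ge_cart closed_halfspace_ge)
qed

locale simp_setup =
  fixes c :: "('n::finite \<Rightarrow> nat) \<Rightarrow> real" and \<delta> :: "'n \<Rightarrow> nat"
  assumes fin: "is_poly c"
    and dpos: "\<forall>i. \<delta> i \<ge> 1 \<and> c (pure_exp i (\<delta> i)) \<noteq> 0"
    and onsimp: "\<forall>\<nu>\<in>mono_supp c. (\<Sum>i\<in>UNIV. real (\<nu> i) / real (\<delta> i)) = 1"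
begin

abbreviation "U \<equiv> (\<Union>\<nu>\<in>mono_supp c. (\<lambda>y. exp_vec \<nu> + y) ` nonneg_orthant)"

lemma U_sub: "U \<subseteq> Pset \<delta>"
proof
  fix z assume "z \<in> U"
  then obtain \<nu> y where nu: "\<nu> \<in> mono_supp c" and y: "y \<in> nonneg_orthant" and z: "z = exp_vec \<nu> + y" by blast
  have "avec \<delta> \<bullet> exp_vec \<nu> = 1" using onsimp nu by (simp add: avec_inner exp_vec_def)
  moreover have "avec \<delta> \<bullet> y \<ge> 0" using y unfolding avec_inner nonneg_orthant_def
    by (intro sum_nonneg) auto
  ultimately show "z \<in> Pset \<delta>" using y z
    by (auto simp: Pset_def nonneg_orthant_def exp_vec_def inner_add_right)
qed

lemma ev_in_U: "y \<in> nonneg_orthant \<Longrightarrow> ev \<delta> i + y \<in> U"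
proof -
  assume y: "y \<in> nonneg_orthant"
  have "pure_exp i (\<delta> i) \<in> mono_supp c" using dpos by (simp add: mono_supp_def)
  thus ?thesis using y ev_exp[of i \<delta>] by force
qed

lemma Gamma_eq: "newton_polyhedron c = Pset \<delta>"
proof
  show "newton_polyhedron c \<subseteq> Pset \<delta>"
    unfolding newton_polyhedron_def using U_sub convex_Pset by (rule hull_minimal)
next
  show "Pset \<delta> \<subseteq> newton_polyhedron c"
  proof
    fix x assume x: "x \<in> Pset \<delta>"
    define s where "s = avec \<delta> \<bullet> x"
    have s1: "s \<ge> 1" using x by (simp add: Pset_def s_def)
    have xn: "\<forall>i. 0 \<le> x$i" using x by (simp add: Pset_def)
    have dp: "real (\<delta> i) > 0" for i using dpos by (simp add: Suc_le_eq)
    define u where "u = (\<lambda>i. (x$i / real (\<delta> i)) / s)"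
    define y where "y = (1 - 1/s) *\<^sub>R x"
    have yn: "y \<in> nonneg_orthant" using xn s1 by (simp add: y_def nonneg_orthant_def)
    have "(\<Sum>i\<in>UNIV. u i *\<^sub>R (ev \<delta> i + y)) \<in> newton_polyhedron c"
      unfolding newton_polyhedron_def
    proof (rule convex_sum)
      show "(\<Sum>i\<in>UNIV. u i) = 1" using s1 unfolding u_def sum_divide_distrib[symmetric] by (simp add: s_def avec_inner)
      show "0 \<le> u i" for i using xn s1 dp by (simp add: u_def)
      show "ev \<delta> i + y \<in> convex hull U" for i by (rule hull_inc[OF ev_in_U[OF yn]])
    qed auto
    moreover have "(\<Sum>i\<in>UNIV. u i *\<^sub>R (ev \<delta> i + y)) = x"
    proof -
      have "(\<Sum>i\<in>UNIV. u i *\<^sub>R (ev \<delta> i + y)) = (\<Sum>i\<in>UNIV. u i *\<^sub>R ev \<delta> i) + (\<Sum>i\<in>UNIV. u i *\<^sub>R y)"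
        by (simp only: scaleR_add_right sum.distrib)
      also have "(\<Sum>i\<in>UNIV. u i *\<^sub>R y) = (\<Sum>i\<in>UNIV. u i) *\<^sub>R y"
        by (rule scaleR_sum_left[symmetric])
      also have "(\<Sum>i\<in>UNIV. u i) = 1" using s1 unfolding u_def sum_divide_distrib[symmetric] by (simp add: s_def avec_inner)
      also have "(\<Sum>i\<in>UNIV. u i *\<^sub>R ev \<delta> i) = (1/s) *\<^sub>R x"
      proof (subst vec_eq_iff, intro allI)
        fix j
        have "(\<Sum>i\<in>UNIV. u i *\<^sub>R ev \<delta> i) $ j = (\<Sum>i\<in>UNIV. if i = j then u j * real (\<delta> j) else 0)"
          unfolding sum_component by (intro sum.cong) (auto simp: ev_def)
        also have "\<dots> = u j * real (\<delta> j)" by simp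
        also have "\<dots> = x$j / s" using dp[of j] by (simp add: u_def)
        finally show "(\<Sum>i\<in>UNIV. u i *\<^sub>R ev \<delta> i) $ j = ((1/s) *\<^sub>R x) $ j" by simp
      qed
      finally have "(\<Sum>i\<in>UNIV. u i *\<^sub>R (ev \<delta> i + y)) = (1/s) *\<^sub>R x + (1 - 1/s) *\<^sub>R x"
        by (simp add: y_def)
      also have "\<dots> = (1/s + (1 - 1/s)) *\<^sub>R x" by (rule scaleR_left_distrib[symmetric])
      finally show ?thesis by simp
    qed
    ultimately show "x \<in> newton_polyhedron c" by simp
  qed
qed


definition mu :: "('n \<Rightarrow> nat) \<Rightarrow> nat" where
  "mu k = Min (range (\<lambda>i. k i * \<delta> i))"

lemma mu_le: "mu k \<le> k i * \<delta> i"
  unfolding mu_def by (rule Min_le) auto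

lemma mu_attained: obtains j where "mu k = k j * \<delta> j"
proof -
  have "mu k \<in> range (\<lambda>i. k i * \<delta> i)" unfolding mu_def by (rule Min_in) auto
  thus ?thesis using that by blast
qed

lemma dp: "real (\<delta> i) > 0" using dpos by (simp add: Suc_le_eq)

lemma expk_inner: "exp_vec k \<bullet> x = (\<Sum>i\<in>UNIV. real (k i) * x$i)"
  by (simp add: exp_vec_def inner_vec_def)

lemma lower: "x \<in> Pset \<delta> \<Longrightarrow> real (mu k) \<le> exp_vec k \<bullet> x"
proof -
  assume x: "x \<in> Pset \<delta>"
  have xn: "0 \<le> x$i" for i using x by (simp add: Pset_def)
  have a1: "1 \<le> avec \<delta> \<bullet> x" using x by (simp add: Pset_def)
  have "real (mu k) \<le> real (mu k) * (avec \<delta> \<bullet> x)" using a1 by (simp add: mult_le_cancel_left1)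
  also have "\<dots> = (\<Sum>i\<in>UNIV. (real (mu k) / real (\<delta> i)) * x$i)"
    by (simp add: avec_inner sum_distrib_left)
  also have "\<dots> \<le> (\<Sum>i\<in>UNIV. real (k i) * x$i)"
  proof (rule sum_mono)
    fix i
    have "real (mu k) \<le> real (k i) * real (\<delta> i)" using mu_le[of k i] by (metis of_nat_le_iff of_nat_mult)
    hence "real (mu k) / real (\<delta> i) \<le> real (k i)" using dp[of i] by (simp add: divide_le_eq)
    thus "(real (mu k) / real (\<delta> i)) * x$i \<le> real (k i) * x$i" using xn[of i] by (rule mult_right_mono)
  qed
  finally show ?thesis by (simp add: expk_inner)
qed

lemma expk_ev: "exp_vec k \<bullet> ev \<delta> j = real (k j * \<delta> j)"
proof -
  have "exp_vec k \<bullet> ev \<delta> j = (\<Sum>i\<in>UNIV. if i = j then real (k j) * real (\<delta> j) else 0)"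
    unfolding expk_inner by (intro sum.cong) (auto simp: ev_def)
  thus ?thesis by simp
qed

lemma ev_P: "ev \<delta> i \<in> Pset \<delta>"
  using U_sub ev_in_U[of 0 i] by (auto simp: nonneg_orthant_def)

lemma mfun_eq: "mfun c (exp_vec k) = real (mu k)"
proof -
  obtain j where j: "mu k = k j * \<delta> j" using mu_attained by blast
  show ?thesis unfolding mfun_def Gamma_eq
  proof (rule cInf_eq_minimum)
    show "real (mu k) \<in> (\<bullet>) (exp_vec k) ` Pset \<delta>"
      using ev_P[of j] expk_ev[of k j] j by (metis image_eqI)
    show "\<And>y. y \<in> (\<bullet>) (exp_vec k) ` Pset \<delta> \<Longrightarrow> real (mu k) \<le> y" using lower by blast
  qed
qed

definition Fk :: "('n \<Rightarrow> nat) \<Rightarrow> (real^'n) set" where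
  "Fk k = {x \<in> newton_polyhedron c. exp_vec k \<bullet> x = mfun c (exp_vec k)}"

lemma Fk_eq: "Fk k = Pset \<delta> \<inter> {x. exp_vec k \<bullet> x = real (mu k)}"
  by (auto simp: Fk_def Gamma_eq mfun_eq)

lemma Fk_face: "Fk k face_of newton_polyhedron c"
  unfolding Fk_eq Gamma_eq
  by (rule face_of_Int_supporting_hyperplane_ge[OF convex_Pset]) (use lower in auto)

lemma Fk_ne: "Fk k \<noteq> {}"
proof -
  obtain j where j: "mu k = k j * \<delta> j" using mu_attained by blast
  have "ev \<delta> j \<in> Fk k" unfolding Fk_eq using ev_P[of j] expk_ev[of k j] j by simp
  thus ?thesis by blast
qed

lemma Fk_compact: "(\<forall>i. k i > 0) \<Longrightarrow> compact (Fk k)"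
proof -
  assume kp: "\<forall>i. k i > 0"
  have "closed (Fk k)" unfolding Fk_eq by (intro closed_Int closed_Pset closed_hyperplane)
  moreover have "Fk k \<subseteq> cbox 0 (\<chi> i. real (mu k) / real (k i))"
  proof
    fix x assume x: "x \<in> Fk k"
    have xn: "0 \<le> x$i" for i using x by (simp add: Fk_eq Pset_def)
    have s: "(\<Sum>i\<in>UNIV. real (k i) * x$i) = real (mu k)" using x by (simp add: Fk_eq expk_inner)
    have "x$i \<le> real (mu k) / real (k i)" for i
    proof -
      have "real (k i) * x$i \<le> (\<Sum>i\<in>UNIV. real (k i) * x$i)"
        by (rule member_le_sum) (use xn in auto)
      hence "real (k i) * x$i \<le> real (mu k)" using s by simp
      moreover have "real (k i) > 0" using kp by simp
      ultimately show ?thesis by (simp add: le_divide_eq mult.commute)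
    qed
    thus "x \<in> cbox 0 (\<chi> i. real (mu k) / real (k i))" using xn by (simp add: mem_box_cart)
  qed
  hence "bounded (Fk k)" using bounded_cbox bounded_subset by blast
  ultimately show ?thesis by (simp add: compact_eq_bounded_closed)
qed

lemma Fk_noncompact: "k j = 0 \<Longrightarrow> \<not> compact (Fk k)"
proof
  assume kj: "k j = 0" and cp: "compact (Fk k)"
  obtain i where i: "mu k = k i * \<delta> i" using mu_attained by blast
  obtain B where B: "\<forall>x\<in>Fk k. norm x \<le> B" using compact_imp_bounded[OF cp] bounded_iff by blast
  define t where "t = max 0 B + 1"
  define z where "z = ev \<delta> i + (\<chi> l. if l = j then t else 0)"
  have yn: "(\<chi> l. if l = j then t else 0) \<in> nonneg_orthant" by (simp add: nonneg_orthant_def t_def)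
  have zP: "z \<in> Pset \<delta>" using U_sub ev_in_U[OF yn] by (auto simp: z_def)
  have "exp_vec k \<bullet> (\<chi> l. if l = j then t else 0) = (\<Sum>l\<in>UNIV. if l = j then real (k j) * t else 0)"
    unfolding expk_inner by (intro sum.cong) auto
  hence "exp_vec k \<bullet> (\<chi> l. if l = j then t else 0) = 0" using kj by simp
  hence "exp_vec k \<bullet> z = real (mu k)" using expk_ev[of k i] i by (simp add: z_def inner_add_right)
  hence "z \<in> Fk k" using zP by (simp add: Fk_eq)
  hence "norm z \<le> B" using B by blast
  moreover have "z$j \<ge> t" using dp[of i] by (simp add: z_def ev_def)
  moreover have "\<bar>z$j\<bar> \<le> norm z" by (rule component_le_norm_cart)
  ultimately show False unfolding t_def by linarith
qed

lemma Fk_CF: "Fk k \<in> compact_faces c \<longleftrightarrow> (\<forall>i. k i > 0)"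
  using Fk_face Fk_ne Fk_compact Fk_noncompact unfolding compact_faces_def by blast

lemma extreme_sub: "x extreme_point_of newton_polyhedron c \<Longrightarrow> x \<in> exp_vec ` mono_supp c"
proof -
  assume ex: "x extreme_point_of newton_polyhedron c"
  hence "x \<in> U" unfolding newton_polyhedron_def by (rule extreme_point_of_convex_hull)
  then obtain \<nu> y where nu: "\<nu> \<in> mono_supp c" and y: "y \<in> nonneg_orthant" and x: "x = exp_vec \<nu> + y" by blast
  show ?thesis
  proof (cases "y = 0")
    case True thus ?thesis using nu x by simp
  next
    case False
    have z0: "(0::real^'n) \<in> nonneg_orthant" by (simp add: nonneg_orthant_def)
    have "exp_vec \<nu> = exp_vec \<nu> + 0" by simp
    hence "exp_vec \<nu> \<in> (\<lambda>y. exp_vec \<nu> + y) ` nonneg_orthant" using z0 by (rule image_eqI)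
    hence a: "exp_vec \<nu> \<in> newton_polyhedron c" unfolding newton_polyhedron_def
      by (intro hull_inc) (use nu in blast)
    have "(2::real) *\<^sub>R y \<in> nonneg_orthant" using y by (simp add: nonneg_orthant_def)
    hence b: "exp_vec \<nu> + 2 *\<^sub>R y \<in> newton_polyhedron c" unfolding newton_polyhedron_def
      by (intro hull_inc) (use nu in blast)
    have "x = midpoint (exp_vec \<nu>) (exp_vec \<nu> + 2 *\<^sub>R y)"
      by (simp add: x midpoint_def vec_eq_iff field_simps)
    moreover have "exp_vec \<nu> \<noteq> exp_vec \<nu> + 2 *\<^sub>R y" using False by simp
    ultimately have "x \<in> open_segment (exp_vec \<nu>) (exp_vec \<nu> + 2 *\<^sub>R y)" by simp
    thus ?thesis using ex a b unfolding extreme_point_of_def by blast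
  qed
qed

lemma CF_finite: "finite (compact_faces c)"
proof -
  have "compact_faces c \<subseteq> (\<lambda>A. convex hull A) ` Pow (exp_vec ` mono_supp c)"
  proof
    fix \<tau> assume t: "\<tau> \<in> compact_faces c"
    hence f: "\<tau> face_of newton_polyhedron c" and cpt: "compact \<tau>" by (auto simp: compact_faces_def)
    have "\<tau> = convex hull {x. x extreme_point_of \<tau>}"
      by (rule Krein_Milman_Minkowski[OF cpt face_of_imp_convex[OF f]])
    moreover have "{x. x extreme_point_of \<tau>} \<subseteq> exp_vec ` mono_supp c"
      using extreme_point_of_face[OF f] extreme_sub by blast
    ultimately show "\<tau> \<in> (\<lambda>A. convex hull A) ` Pow (exp_vec ` mono_supp c)" by blast
  qed
  moreover have "finite (exp_vec ` mono_supp c)" using fin by (simp add: is_poly_def)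
  ultimately show ?thesis by (meson finite_Pow_iff finite_imageI finite_subset)
qed

end



definition KV :: "'n::finite set \<Rightarrow> nat \<Rightarrow> ('n \<Rightarrow> nat) set" where
  "KV V n = {k. (\<forall>i. i \<notin> V \<longrightarrow> k i = 0) \<and> sum k V = n}"

lemma finite_bounded_funs: "finite {k::'n::finite \<Rightarrow> nat. \<forall>i. k i \<le> n}"
proof -
  have "{k::'n \<Rightarrow> nat. \<forall>i. k i \<le> n} = (\<Pi>\<^sub>E i \<in> UNIV. {..n})"
    by (auto simp: PiE_def Pi_def extensional_def)
  thus ?thesis by (simp add: finite_PiE)
qed

lemma finite_KV: "finite V \<Longrightarrow> finite (KV V n)"
proof -
  assume fV: "finite V"
  have "KV V n \<subseteq> {k. \<forall>i. k i \<le> n}"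
  proof (clarify)
    fix k i assume k: "k \<in> KV V n"
    show "k i \<le> n"
    proof (cases "i \<in> V")
      case True
      hence "k i \<le> sum k V" using fV by (intro member_le_sum) auto
      thus ?thesis using k by (simp add: KV_def)
    next
      case False thus ?thesis using k by (simp add: KV_def)
    qed
  qed
  thus ?thesis using finite_bounded_funs finite_subset by blast
qed

lemma prod_nth_gen:
  fixes f :: "'n::finite \<Rightarrow> 'a::comm_ring_1 fps"
  assumes "finite V"
  shows "(\<Prod>i\<in>V. f i) $ n = (\<Sum>k\<in>KV V n. \<Prod>i\<in>V. f i $ k i)"
  using assms
proof (induction V arbitrary: n rule: finite_induct)
  case empty
  show ?case
  proof (cases "n = 0")
    case True
    hence e: "KV {} n = {\<lambda>_. 0}" by (auto simp: KV_def)
    have "(\<Sum>k\<in>KV {} n. \<Prod>i\<in>{}. f i $ k i) = 1" unfolding e by simp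
    thus ?thesis using True by simp
  next
    case False
    hence e: "KV {} n = {}" by (auto simp: KV_def)
    have "(\<Sum>k\<in>KV {} n. \<Prod>i\<in>{}. f i $ k i) = 0" unfolding e by simp
    thus ?thesis using False by simp
  qed
next
  case (insert j V)
  have "(\<Prod>i\<in>insert j V. f i) $ n = (f j * (\<Prod>i\<in>V. f i)) $ n" using insert by simp
  also have "\<dots> = (\<Sum>a=0..n. f j $ a * (\<Prod>i\<in>V. f i) $ (n - a))" by (rule fps_mult_nth)
  also have "\<dots> = (\<Sum>a=0..n. \<Sum>k\<in>KV V (n - a). f j $ a * (\<Prod>i\<in>V. f i $ k i))"
    by (simp add: insert.IH sum_distrib_left)
  also have "\<dots> = (\<Sum>p\<in>Sigma {0..n} (\<lambda>a. KV V (n - a)). f j $ fst p * (\<Prod>i\<in>V. f i $ snd p i))"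
    by (subst sum.Sigma) (auto simp: finite_KV insert.hyps split_beta)
  also have "\<dots> = (\<Sum>k\<in>KV (insert j V) n. \<Prod>i\<in>insert j V. f i $ k i)"
  proof (rule sum.reindex_bij_witness[where j = "\<lambda>p. (snd p)(j := fst p)" and i = "\<lambda>k. (k j, k(j := 0))"])
    fix p assume p: "p \<in> Sigma {0..n} (\<lambda>a. KV V (n - a))"
    hence kj: "snd p j = 0" using insert.hyps by (auto simp: KV_def)
    show "(((snd p)(j := fst p)) j, (snd p)(j := fst p, j := 0)) = p"
      using kj by (cases p) auto
    have s: "sum (snd p) V = n - fst p" "fst p \<le> n" using p by (auto simp: KV_def)
    have "sum ((snd p)(j := fst p)) V = sum (snd p) V" using insert.hyps by (intro sum.cong) auto
    thus "(snd p)(j := fst p) \<in> KV (insert j V) n"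
      using p s insert.hyps by (auto simp: KV_def)
    have "(\<Prod>i\<in>V. f i $ ((snd p)(j := fst p)) i) = (\<Prod>i\<in>V. f i $ snd p i)"
      using insert.hyps by (intro prod.cong) auto
    thus "(\<Prod>i\<in>insert j V. f i $ ((snd p)(j := fst p)) i) = f j $ fst p * (\<Prod>i\<in>V. f i $ snd p i)"
      using insert.hyps by simp
  next
    fix k assume k: "k \<in> KV (insert j V) n"
    show "(snd (k j, k(j := 0)))(j := fst (k j, k(j := 0))) = k" by simp
    have s: "k j + sum k V = n" using k insert.hyps by (simp add: KV_def)
    have "sum (k(j := 0)) V = sum k V" using insert.hyps by (intro sum.cong) auto
    thus "(k j, k(j := 0)) \<in> Sigma {0..n} (\<lambda>a. KV V (n - a))"
      using k s by (auto simp: KV_def)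
  qed
  finally show ?case .
qed

definition geomI :: "'a::comm_ring_1 fps" where "geomI = Abs_fps (\<lambda>_. 1)"

lemma geom_mult: "Abs_fps (\<lambda>_. 1::'a::comm_ring_1) * (1 - fps_X) = 1"
proof (rule fps_ext)
  fix n
  show "(Abs_fps (\<lambda>_. 1::'a) * (1 - fps_X)) $ n = (1::'a fps) $ n"
    by (simp add: algebra_simps mult.commute[of _ fps_X])
qed

definition Gc :: "('n::finite \<Rightarrow> nat) \<Rightarrow> int fps" where
  "Gc cc = (\<Prod>i\<in>UNIV. fps_X ^ cc i * Abs_fps (\<lambda>_. 1))"

lemma Gc_nth: "Gc cc $ n = int (card {k. sum k UNIV = n \<and> (\<forall>i. k i \<ge> cc i)})"
proof -
  have "Gc cc $ n = (\<Sum>k\<in>KV UNIV n. \<Prod>i\<in>UNIV. (fps_X ^ cc i * Abs_fps (\<lambda>_. 1::int)) $ k i)"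
    unfolding Gc_def by (rule prod_nth_gen) simp
  also have "\<dots> = (\<Sum>k\<in>KV UNIV n. if (\<forall>i. k i \<ge> cc i) then 1 else 0)"
  proof (intro sum.cong refl)
    fix k
    have "(\<Prod>i\<in>UNIV. (fps_X ^ cc i * Abs_fps (\<lambda>_. 1::int)) $ k i) = (\<Prod>i\<in>UNIV. if k i \<ge> cc i then 1 else 0)"
      by (intro prod.cong) (auto simp: fps_X_power_mult_nth)
    also have "\<dots> = (if (\<forall>i. k i \<ge> cc i) then 1 else 0)"
      by (auto simp: prod.neutral)
    finally show "(\<Prod>i\<in>UNIV. (fps_X ^ cc i * Abs_fps (\<lambda>_. 1::int)) $ k i) = (if (\<forall>i. k i \<ge> cc i) then 1 else 0)" .
  qed
  also have "\<dots> = int (card (KV UNIV n \<inter> {k. \<forall>i. k i \<ge> cc i}))"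
    by (simp add: sum.If_cases finite_KV)
  also have "KV UNIV n \<inter> {k. \<forall>i. k i \<ge> cc i} = {k. sum k UNIV = n \<and> (\<forall>i. k i \<ge> cc i)}"
    by (auto simp: KV_def)
  finally show ?thesis .
qed

lemma Gc_mult: "(1 - fps_X) ^ CARD('n) * Gc (cc :: 'n::finite \<Rightarrow> nat) = fps_X ^ (\<Sum>i\<in>UNIV. cc i)"
proof -
  have "(1 - fps_X) ^ CARD('n) * Gc cc = (\<Prod>i\<in>(UNIV::'n set). (1 - fps_X) * (fps_X ^ cc i * Abs_fps (\<lambda>_. 1)))"
    by (simp add: Gc_def prod.distrib)
  also have "\<dots> = (\<Prod>i\<in>(UNIV::'n set). fps_X ^ cc i)"
  proof (intro prod.cong refl)
    fix i
    have "(1 - fps_X) * (fps_X ^ cc i * Abs_fps (\<lambda>_. 1)) = (fps_X ^ cc i :: int fps) * (Abs_fps (\<lambda>_. 1) * (1 - fps_X))"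
      by (simp add: algebra_simps)
    thus "(1 - fps_X) * (fps_X ^ cc i * Abs_fps (\<lambda>_. 1)) = (fps_X ^ cc i :: int fps)"
      by (simp only: geom_mult mult_1_right)
  qed
  also have "\<dots> = fps_X ^ (\<Sum>i\<in>UNIV. cc i)" by (simp add: power_sum)
  finally show ?thesis .
qed

lemma LL_minus: "(LL - 1) = fls_X_inv * fps_to_fls (1 - fps_X)"
proof -
  have "fls_X_inv * fls_X = (1 :: int fls)" by (simp add: fls_X_inv_times_conv_shift fls_X_conv_shift_1)
  thus ?thesis by (simp add: algebra_simps)
qed

lemma LLX: "fls_X_inv ^ d * fls_X ^ d = (1 :: int fls)"
proof -
  have "fls_X_inv * fls_X = (1 :: int fls)" by (simp add: fls_X_inv_times_conv_shift fls_X_conv_shift_1)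
  thus ?thesis by (metis power_mult_distrib power_one)
qed


context simp_setup
begin

definition Nset :: "nat \<Rightarrow> nat \<Rightarrow> ('n \<Rightarrow> nat) set" where
  "Nset m n = {k. (\<forall>i. k i > 0) \<and> sum k UNIV = n \<and> mu k = m}"

definition Qm :: "nat \<Rightarrow> int fps" where
  "Qm m = Abs_fps (\<lambda>n. int (card (Nset m n)))"

lemma sigma_iff: "exp_vec k \<in> sigma_cone c \<tau> \<longleftrightarrow> Fk k = \<tau>"
  by (simp add: sigma_cone_def Fk_def nonneg_orthant_def exp_vec_def)

lemma card_Nset: "(\<Sum>\<tau>\<in>compact_faces c. int (card {k. exp_vec k \<in> sigma_cone c \<tau> \<and> sum k UNIV = n
                                \<and> mfun c (exp_vec k) = real m})) = int (card (Nset m n))"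
proof -
  define A where "A = (\<lambda>\<tau>. {k. Fk k = \<tau> \<and> sum k UNIV = n \<and> mu k = m})"
  have eqA: "{k. exp_vec k \<in> sigma_cone c \<tau> \<and> sum k UNIV = n \<and> mfun c (exp_vec k) = real m} = A \<tau>" for \<tau>
    by (auto simp: A_def sigma_iff mfun_eq)
  have fA: "finite (A \<tau>)" for \<tau>
  proof -
    have "A \<tau> \<subseteq> KV UNIV n" by (auto simp: A_def KV_def)
    from finite_subset[OF this finite_KV[of UNIV n]] show ?thesis by simp
  qed
  have U: "Nset m n = \<Union>(A ` compact_faces c)"
    by (auto simp: Nset_def A_def Fk_CF)
  have "card (Nset m n) = (\<Sum>\<tau>\<in>compact_faces c. card (A \<tau>))"
    unfolding U
  proof (rule card_UN_disjoint)
    show "finite (compact_faces c)" by (rule CF_finite)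
    show "\<forall>i\<in>compact_faces c. finite (A i)" using fA by blast
    show "\<forall>i\<in>compact_faces c. \<forall>j\<in>compact_faces c. i \<noteq> j \<longrightarrow> A i \<inter> A j = {}"
      unfolding A_def by blast
  qed
  thus ?thesis unfolding eqA by (simp only: of_nat_sum)
qed

lemma Ssum_nth: "(\<Sum>\<tau>\<in>compact_faces c. S_sigma c \<tau>) $ m = fps_to_fls (Qm m)"
proof (rule fls_eqI)
  fix j :: int
  have "fls_nth ((\<Sum>\<tau>\<in>compact_faces c. S_sigma c \<tau>) $ m) j = (\<Sum>\<tau>\<in>compact_faces c. fls_nth ((S_sigma c \<tau>) $ m) j)"
    by (simp only: fps_sum_nth fls_nth_sum)
  also have "\<dots> = (\<Sum>\<tau>\<in>compact_faces c. if j < 0 then 0 else int (card {k. exp_vec k \<in> sigma_cone c \<tau> \<and> sum k UNIV = nat j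
                                \<and> mfun c (exp_vec k) = real m}))"
    by (intro sum.cong refl) (simp only: S_sigma_def fps_to_fls_nth fps_nth_Abs_fps)
  also have "\<dots> = fls_nth (fps_to_fls (Qm m)) j"
  proof (cases "j < 0")
    case True thus ?thesis by simp
  next
    case False
    hence "(\<Sum>\<tau>\<in>compact_faces c. if j < 0 then 0 else int (card {k. exp_vec k \<in> sigma_cone c \<tau> \<and> sum k UNIV = nat j
                                \<and> mfun c (exp_vec k) = real m})) = int (card (Nset m (nat j)))"
      using card_Nset[of "nat j"] by (simp only: if_False)
    thus ?thesis using False by (simp only: fps_to_fls_nth Qm_def fps_nth_Abs_fps if_False)
  qed
  finally show "fls_nth ((\<Sum>\<tau>\<in>compact_faces c. S_sigma c \<tau>) $ m) j = fls_nth (fps_to_fls (Qm m)) j" .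
qed

lemma mu_pos: "(\<forall>i. k i > 0) \<Longrightarrow> mu k \<ge> 1"
proof -
  assume "\<forall>i. k i > 0"
  moreover obtain j where "mu k = k j * \<delta> j" using mu_attained by blast
  ultimately have "k j \<ge> 1" "\<delta> j \<ge> 1" using dpos by (auto simp: Suc_le_eq)
  hence "1 * 1 \<le> k j * \<delta> j" by (rule mult_le_mono)
  thus ?thesis using \<open>mu k = k j * \<delta> j\<close> by simp
qed

lemma Q0: "Qm 0 = 0"
proof -
  have e: "Nset 0 n = {}" for n
  proof (rule equals0I)
    fix k assume "k \<in> Nset 0 n"
    hence "\<forall>i. k i > 0" "mu k = 0" by (simp_all add: Nset_def)
    thus False using mu_pos[of k] by simp
  qed
  show ?thesis by (rule fps_ext) (simp add: Qm_def e)
qed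

lemma ge_iff: "m \<ge> 1 \<Longrightarrow> (k \<ge> (m - 1) div d + 1 \<longleftrightarrow> k * d \<ge> m)" if "d \<ge> 1" for k d m :: nat
proof -
  assume m: "m \<ge> 1"
  have "k \<ge> (m - 1) div d + 1 \<longleftrightarrow> (m - 1) div d < k" by auto
  also have "\<dots> \<longleftrightarrow> m - 1 < k * d" using that by (simp add: div_less_iff_less_mult)
  also have "\<dots> \<longleftrightarrow> m \<le> k * d" using m by auto
  finally show ?thesis .
qed

lemma Gset: "m \<ge> 1 \<Longrightarrow> {k. sum k UNIV = n \<and> (\<forall>i. k i \<ge> (m - 1) div \<delta> i + 1)}
     = {k. sum k UNIV = n \<and> (\<forall>i. k i > 0) \<and> mu k \<ge> m}"
proof -
  assume m: "m \<ge> 1"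
  have "(\<forall>i. k i \<ge> (m - 1) div \<delta> i + 1) \<longleftrightarrow> (\<forall>i. k i > 0) \<and> mu k \<ge> m" for k
  proof -
    have "(\<forall>i. k i \<ge> (m - 1) div \<delta> i + 1) \<longleftrightarrow> (\<forall>i. k i * \<delta> i \<ge> m)"
      using ge_iff[OF _ m] dpos by blast
    also have "\<dots> \<longleftrightarrow> mu k \<ge> m" unfolding mu_def by (subst Min_ge_iff) auto
    also have "\<dots> \<longleftrightarrow> (\<forall>i. k i > 0) \<and> mu k \<ge> m"
    proof
      assume h: "m \<le> mu k"
      have "k i > 0" for i
      proof (rule ccontr)
        assume "\<not> k i > 0"
        hence "k i * \<delta> i = 0" by simp
        hence "mu k \<le> 0" using mu_le[of k i] by linarith
        thus False using h m by linarith
      qed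
      thus "(\<forall>i. k i > 0) \<and> m \<le> mu k" using h by blast
    qed simp
    finally show ?thesis .
  qed
  thus ?thesis by blast
qed

lemma Qm_diff: "m \<ge> 1 \<Longrightarrow> Qm m = Gc (\<lambda>i. (m - 1) div \<delta> i + 1) - Gc (\<lambda>i. m div \<delta> i + 1)"
proof (rule fps_ext)
  fix n assume m: "m \<ge> 1"
  define G where "G = (\<lambda>m. {k. sum k UNIV = n \<and> (\<forall>i. k i > 0) \<and> mu k \<ge> m})"
  have g1: "Gc (\<lambda>i. (m - 1) div \<delta> i + 1) $ n = int (card (G m))"
    using Gset[OF m] by (simp add: Gc_nth G_def)
  have g2: "Gc (\<lambda>i. m div \<delta> i + 1) $ n = int (card (G (m+1)))"
    using Gset[of "m+1"] by (simp add: Gc_nth G_def)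
  have fG: "finite (G m)"
  proof -
    have "G m \<subseteq> KV UNIV n" by (auto simp: G_def KV_def)
    from finite_subset[OF this finite_KV[of UNIV n]] show ?thesis by simp
  qed
  have sub: "G (m+1) \<subseteq> G m" by (auto simp: G_def)
  have "Nset m n = G m - G (m+1)" by (auto simp: Nset_def G_def)
  hence "card (Nset m n) = card (G m) - card (G (m+1))" using card_Diff_subset[OF finite_subset[OF sub fG] sub] by simp
  moreover have "card (G (m+1)) \<le> card (G m)" using card_mono[OF fG sub] .
  moreover have "(Gc (\<lambda>i. (m - 1) div \<delta> i + 1) - Gc (\<lambda>i. m div \<delta> i + 1)) $ n = int (card (G m)) - int (card (G (m+1)))"
    by (simp only: fps_sub_nth g1 g2)
  ultimately show "Qm m $ n = (Gc (\<lambda>i. (m - 1) div \<delta> i + 1) - Gc (\<lambda>i. m div \<delta> i + 1)) $ n"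
    by (simp add: Qm_def of_nat_diff)
qed

lemma Q_fls: "m \<ge> 1 \<Longrightarrow> (LL - 1) ^ CARD('n) * fps_to_fls (Qm m)
   = fls_X ^ (\<Sum>i\<in>UNIV. (m - 1) div \<delta> i) - fls_X ^ (\<Sum>i\<in>UNIV. m div \<delta> i)"
proof -
  assume m: "m \<ge> 1"
  define d where "d = CARD('n)"
  have s1: "(\<Sum>i\<in>UNIV. (m - 1) div \<delta> i + 1) = d + (\<Sum>i\<in>UNIV. (m - 1) div \<delta> i)"
    by (subst sum.distrib) (simp add: d_def)
  have s2: "(\<Sum>i\<in>UNIV. m div \<delta> i + 1) = d + (\<Sum>i\<in>UNIV. m div \<delta> i)"
    by (subst sum.distrib) (simp add: d_def)
  have "(1 - fps_X) ^ d * Qm m = fps_X ^ (d + (\<Sum>i\<in>UNIV. (m - 1) div \<delta> i)) - fps_X ^ (d + (\<Sum>i\<in>UNIV. m div \<delta> i))"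
    unfolding Qm_diff[OF m] right_diff_distrib d_def Gc_mult s1[unfolded d_def] s2[unfolded d_def] ..
  hence "fps_to_fls ((1 - fps_X) ^ d * Qm m) = fls_X ^ (d + (\<Sum>i\<in>UNIV. (m - 1) div \<delta> i)) - fls_X ^ (d + (\<Sum>i\<in>UNIV. m div \<delta> i))"
    by (simp only: fps_to_fls_minus fps_to_fls_power fps_X_to_fls)
  hence "fps_to_fls ((1 - fps_X) ^ d * Qm m) = fls_X ^ d * (fls_X ^ (\<Sum>i\<in>UNIV. (m - 1) div \<delta> i) - fls_X ^ (\<Sum>i\<in>UNIV. m div \<delta> i))"
    by (simp only: power_add right_diff_distrib)
  moreover have "(LL - 1) ^ d * fps_to_fls (Qm m) = fls_X_inv ^ d * fps_to_fls ((1 - fps_X) ^ d * Qm m)"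
    by (simp only: LL_minus power_mult_distrib mult.assoc fps_to_fls_power fls_times_fps_to_fls)
  ultimately have "(LL - 1) ^ d * fps_to_fls (Qm m) = (fls_X_inv ^ d * fls_X ^ d) * (fls_X ^ (\<Sum>i\<in>UNIV. (m - 1) div \<delta> i) - fls_X ^ (\<Sum>i\<in>UNIV. m div \<delta> i))"
    by (simp add: mult.assoc)
  thus ?thesis by (simp add: LLX d_def)
qed

end


theorem lemma4p4:
  fixes c :: "('n::finite \<Rightarrow> nat) \<Rightarrow> real"
    and \<delta> :: "'n \<Rightarrow> nat"
  assumes "is_poly c"
    and "convenient c"
    and "non_degenerate c"
    and "weighted_homogeneous c"
    and "\<forall>i. \<delta> i \<ge> 1 \<and> c (pure_exp i (\<delta> i)) \<noteq> 0"
  shows "B_f c - fps_X * geom_T =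
         - Abs_fps (\<lambda>m. if m = 0 then 0 else LLinv ^ (\<Sum>i\<in>UNIV. m div \<delta> i))"
proof -
  have os: "\<forall>\<nu>\<in>mono_supp c. (\<Sum>i\<in>UNIV. real (\<nu> i) / real (\<delta> i)) = 1"
    using supp_on_simplex[OF assms(1) assms(4) assms(5)] .
  interpret S: simp_setup c \<delta>
    using assms(1) assms(5) os by unfold_locales
  define R where "R = Abs_fps (\<lambda>m. if m = 0 then 0 else LLinv ^ (\<Sum>i\<in>UNIV. m div \<delta> i))"
  define Q where "Q = (\<Sum>\<tau>\<in>compact_faces c. S_sigma c \<tau>)"
  define E where "E = (LL - 1) ^ CARD('n)"
  have key: "fps_const E * Q = fps_X - (1 - fps_X) * R"
  proof (rule fps_ext)
    fix m
    have L: "(fps_const E * Q) $ m = E * fps_to_fls (S.Qm m)"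
      by (simp add: Q_def S.Ssum_nth)
    show "(fps_const E * Q) $ m = (fps_X - (1 - fps_X) * R) $ m"
    proof (cases "m = 0")
      case True
      thus ?thesis unfolding L by (simp add: S.Q0 R_def algebra_simps)
    next
      case False
      hence m1: "m \<ge> 1" by simp
      have L2: "(fps_const E * Q) $ m = fls_X ^ (\<Sum>i\<in>UNIV. (m - 1) div \<delta> i) - fls_X ^ (\<Sum>i\<in>UNIV. m div \<delta> i)"
      proof -
        have "E * fps_to_fls (S.Qm m) = fls_X ^ (\<Sum>i\<in>UNIV. (m - 1) div \<delta> i) - fls_X ^ (\<Sum>i\<in>UNIV. m div \<delta> i)"
          unfolding E_def by (rule S.Q_fls[OF m1])
        thus ?thesis using L by simp
      qed
      have RHS: "(fps_X - (1 - fps_X) * R) $ m = (if m = 1 then 1 else 0) - fls_X ^ (\<Sum>i\<in>UNIV. m div \<delta> i)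
                  + (if m - 1 = 0 then 0 else fls_X ^ (\<Sum>i\<in>UNIV. (m - 1) div \<delta> i))"
        using False by (simp add: R_def algebra_simps fps_X_mult_nth)
      show ?thesis
      proof (cases "m = 1")
        case True
        thus ?thesis unfolding L2 RHS by simp
      next
        case False
        thus ?thesis unfolding L2 RHS using m1 by simp
      qed
    qed
  qed
  have geom: "geom_T * (1 - fps_X) = 1" unfolding geom_T_def by (rule geom_mult)
  have "B_f c = geom_T * (fps_const E * Q)" by (simp add: B_f_def E_def Q_def ac_simps)
  also have "\<dots> = geom_T * (fps_X - (1 - fps_X) * R)" by (simp only: key)
  finally have "B_f c - fps_X * geom_T = geom_T * (fps_X - (1 - fps_X) * R) - fps_X * geom_T" by simp
  also have "\<dots> = - ((geom_T * (1 - fps_X)) * R)" by (simp add: algebra_simps)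
  also have "\<dots> = - R" by (simp only: geom mult_1_left)
  finally show ?thesis by (simp add: R_def)
qed


end
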